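(* Let ${\bm X}={\bm Y}$ be a finite set, let $m^{\bm X}_\bullet,m^{\bm Y}_\bullet$ be irreducible and aperiodic Markov transition kernels on it, and let the cost matrix $C$ be a pseudometric on ${\bm X}$. Define $C^{(0)}=C$ and $C^{(l)}_{ij}=d_{\mathrm W}(m^{\bm X}_i,m^{\bm Y}_j;C^{(l-1)})$ for $l\ge1$. Then $(C^{(k)})_{k\in\mathbb{N}}$ converges to a constant matrix.
   Context: For probability measures $\alpha,\beta$ on finite sets and cost $D$, $d_{\mathrm W}(\alpha,\beta;D)=\inf_{(X,Y)\in\mathcal{C}(\alpha,\beta)}\mathbb{E}\,D(X,Y)$, where $\mathcal{C}(\alpha,\beta)$ is the set of couplings of $\alpha,\beta$. $m^{\bm X}_i$ denotes the transition distribution from state $i$. *)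

theory Defs
  imports "HOL-Probability.Probability"
begin

definition couplings :: "'a pmf \<Rightarrow> 'b pmf \<Rightarrow> ('a \<times> 'b) pmf set" where
  "couplings \<alpha> \<beta> = {\<gamma>. map_pmf fst \<gamma> = \<alpha> \<and> map_pmf snd \<gamma> = \<beta>}"

definition wasserstein :: "'a pmf \<Rightarrow> 'b pmf \<Rightarrow> ('a \<Rightarrow> 'b \<Rightarrow> real) \<Rightarrow> real" where
  "wasserstein \<alpha> \<beta> D =
     (INF \<gamma> \<in> couplings \<alpha> \<beta>. measure_pmf.expectation \<gamma> (\<lambda>(x, y). D x y))"

primrec kstep :: "('a \<Rightarrow> 'a pmf) \<Rightarrow> nat \<Rightarrow> 'a \<Rightarrow> 'a pmf" where
  "kstep m 0 i = return_pmf i"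
| "kstep m (Suc n) i = bind_pmf (kstep m n i) m"

definition irreducible_kernel :: "('a \<Rightarrow> 'a pmf) \<Rightarrow> bool" where
  "irreducible_kernel m \<longleftrightarrow> (\<forall>i j. \<exists>n. pmf (kstep m n i) j > 0)"

definition period :: "('a \<Rightarrow> 'a pmf) \<Rightarrow> 'a \<Rightarrow> nat" where
  "period m i = Gcd {n. n > 0 \<and> pmf (kstep m n i) i > 0}"

definition aperiodic_kernel :: "('a \<Rightarrow> 'a pmf) \<Rightarrow> bool" where
  "aperiodic_kernel m \<longleftrightarrow> (\<forall>i. period m i = 1)"

definition pseudometric :: "('a \<Rightarrow> 'a \<Rightarrow> real) \<Rightarrow> bool" where
  "pseudometric C \<longleftrightarrow> (\<forall>x. C x x = 0) \<and> (\<forall>x y. C x y = C y x)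
     \<and> (\<forall>x y z. C x z \<le> C x y + C y z)"

primrec cost_iter :: "('a \<Rightarrow> 'a pmf) \<Rightarrow> ('a \<Rightarrow> 'a pmf) \<Rightarrow> ('a \<Rightarrow> 'a \<Rightarrow> real) \<Rightarrow> nat \<Rightarrow> 'a \<Rightarrow> 'a \<Rightarrow> real" where
  "cost_iter mX mY C 0 = C"
| "cost_iter mX mY C (Suc l) = (\<lambda>i j. wasserstein (mX i) (mY j) (cost_iter mX mY C l))"

end

theory Submission imports Defs begin

lemma expect_sum:
  fixes p :: "'a::finite pmf" and f :: "'a \<Rightarrow> real"
  shows "measure_pmf.expectation p f = (\<Sum>z\<in>UNIV. pmf p z * f z)"
  by (subst integral_measure_pmf[where A=UNIV]) auto

lemma sum_pmf_UNIV: "(\<Sum>z\<in>(UNIV::'a::finite set). pmf p z) = 1"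
  by (rule sum_pmf_eq_1) auto

lemma sum_pairs: "(\<Sum>z\<in>(UNIV::('a::finite \<times> 'b::finite) set). f z) = (\<Sum>a\<in>UNIV. \<Sum>b\<in>UNIV. f (a,b))"
  by (simp add: UNIV_Times_UNIV[symmetric] sum.cartesian_product del: UNIV_Times_UNIV)

lemma kstep_add: "kstep m (a + b) i = bind_pmf (kstep m a i) (\<lambda>x. kstep m b x)"
  by (induction b) (simp_all add: bind_return_pmf' bind_assoc_pmf)

lemma kstep_Suc': "kstep m (Suc n) i = bind_pmf (m i) (\<lambda>x. kstep m n x)"
  using kstep_add[of m 1 n i] by (simp add: bind_return_pmf)

lemma pmf_kstep_Suc: "pmf (kstep m (Suc n) i) (x::'a::finite) = (\<Sum>a\<in>UNIV. pmf (m i) a * pmf (kstep m n a) x)"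
  by (simp del: kstep.simps add: kstep_Suc' pmf_bind expect_sum)

lemma pair_kstep_Suc:
  fixes mX mY :: "'a::finite \<Rightarrow> 'a pmf"
  shows "pmf (pair_pmf (kstep mX (Suc n) i) (kstep mY (Suc n) j)) w =
    (\<Sum>z\<in>UNIV. pmf (pair_pmf (mX i) (mY j)) z * pmf (pair_pmf (kstep mX n (fst z)) (kstep mY n (snd z))) w)"
proof -
  obtain x y where w: "w = (x,y)" by fastforce
  show ?thesis unfolding w sum_pairs
    by (simp del: kstep.simps add: pmf_pair pmf_kstep_Suc sum_product mult_ac)
qed

definition lo :: "('a::finite \<Rightarrow> 'a \<Rightarrow> real) \<Rightarrow> real" where "lo D = Min (range (case_prod D))"
definition hi :: "('a::finite \<Rightarrow> 'a \<Rightarrow> real) \<Rightarrow> real" where "hi D = Max (range (case_prod D))"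

lemma lo_le: "lo D \<le> D x y"
  unfolding lo_def by (rule Min_le) (auto intro: rev_image_eqI[of "(x,y)"])
lemma hi_ge: "D x y \<le> hi D"
  unfolding hi_def by (rule Max_ge) (auto intro: rev_image_eqI[of "(x,y)"])
lemma lo_attained: "\<exists>x y. D x y = lo D"
proof -
  have "lo D \<in> range (case_prod D)" unfolding lo_def by (rule Min_in) auto
  then obtain z where "lo D = case_prod D z" by blast
  then show ?thesis by (cases z) auto
qed
lemma lo_greatest: "(\<And>x y. c \<le> D x y) \<Longrightarrow> c \<le> lo D"
  using lo_attained[of D] by metis
lemma hi_least: "(\<And>x y. D x y \<le> c) \<Longrightarrow> hi D \<le> c"
proof -
  have "hi D \<in> range (case_prod D)" unfolding hi_def by (rule Max_in) auto
  then show "(\<And>x y. D x y \<le> c) \<Longrightarrow> hi D \<le> c" by auto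
qed

lemma avg_ge_lo:
  fixes g :: "('a::finite \<times> 'a) pmf"
  shows "lo D \<le> (\<Sum>z\<in>UNIV. pmf g z * case_prod D z)"
proof -
  have "lo D = (\<Sum>z\<in>UNIV. pmf g z * lo D)" by (simp add: sum_distrib_right[symmetric] sum_pmf_UNIV)
  also have "\<dots> \<le> (\<Sum>z\<in>UNIV. pmf g z * case_prod D z)"
    by (rule sum_mono) (auto intro!: mult_left_mono lo_le)
  finally show ?thesis .
qed

lemma avg_le_hi:
  fixes g :: "('a::finite \<times> 'a) pmf"
  shows "(\<Sum>z\<in>UNIV. pmf g z * case_prod D z) \<le> hi D"
proof -
  have "(\<Sum>z\<in>UNIV. pmf g z * case_prod D z) \<le> (\<Sum>z\<in>UNIV. pmf g z * hi D)"
    by (rule sum_mono) (auto intro!: mult_left_mono hi_ge)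
  also have "\<dots> = hi D" by (simp add: sum_distrib_right[symmetric] sum_pmf_UNIV)
  finally show ?thesis .
qed

lemma W_lower:
  fixes p q :: "'a::finite pmf"
  shows "lo D \<le> wasserstein p q D"
  unfolding wasserstein_def
proof (rule cINF_greatest)
  show "couplings p q \<noteq> {}" using map_fst_pair_pmf map_snd_pair_pmf unfolding couplings_def by blast
  fix g assume "g \<in> couplings p q"
  show "lo D \<le> measure_pmf.expectation g (\<lambda>(x, y). D x y)"
    unfolding expect_sum by (rule avg_ge_lo)
qed

lemma W_upper:
  fixes p q :: "'a::finite pmf"
  shows "wasserstein p q D \<le> (\<Sum>z\<in>UNIV. pmf (pair_pmf p q) z * case_prod D z)"
  unfolding wasserstein_def
proof -
  have "pair_pmf p q \<in> couplings p q" using map_fst_pair_pmf map_snd_pair_pmf unfolding couplings_def by blast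
  moreover have "bdd_below ((\<lambda>g. measure_pmf.expectation g (\<lambda>(x, y). D x y)) ` couplings p q)"
    by (rule bdd_belowI[where m="lo D"]) (auto simp: expect_sum intro: avg_ge_lo)
  ultimately have "(INF g\<in>couplings p q. measure_pmf.expectation g (\<lambda>(x, y). D x y))
     \<le> measure_pmf.expectation (pair_pmf p q) (\<lambda>(x, y). D x y)"
    by (rule cINF_lower[rotated])
  then show "(INF g\<in>couplings p q. measure_pmf.expectation g (\<lambda>(x, y). D x y))
     \<le> (\<Sum>z\<in>UNIV. pmf (pair_pmf p q) z * case_prod D z)" by (simp add: expect_sum)
qed

lemma iter_upper:
  fixes mX mY :: "'a::finite \<Rightarrow> 'a pmf"
  shows "cost_iter mX mY C (l + n) i j \<le>
    (\<Sum>w\<in>UNIV. pmf (pair_pmf (kstep mX n i) (kstep mY n j)) w * case_prod (cost_iter mX mY C l) w)"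
proof (induction n arbitrary: i j)
  case 0
  then show ?case proof -
    have "(\<Sum>w\<in>UNIV. pmf (return_pmf (i, j)) w * case_prod (cost_iter mX mY C l) w)
       = (\<Sum>w\<in>UNIV. if w = (i,j) then case_prod (cost_iter mX mY C l) w else 0)"
      by (rule sum.cong) (auto simp: pmf_return)
    then show ?thesis by simp
  qed
next
  case (Suc n)
  let ?E = "case_prod (cost_iter mX mY C l)"
  let ?g = "pair_pmf (mX i) (mY j)"
  let ?Q = "\<lambda>z. pair_pmf (kstep mX n (fst z)) (kstep mY n (snd z))"
  have "cost_iter mX mY C (l + Suc n) i j \<le> (\<Sum>z\<in>UNIV. pmf ?g z * case_prod (cost_iter mX mY C (l+n)) z)"
    by (simp add: W_upper)
  also have "\<dots> \<le> (\<Sum>z\<in>UNIV. pmf ?g z * (\<Sum>w\<in>UNIV. pmf (?Q z) w * ?E w))"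
    by (rule sum_mono, rule mult_left_mono) (auto simp: Suc split: prod.splits)
  also have "\<dots> = (\<Sum>w\<in>UNIV. (\<Sum>z\<in>UNIV. pmf ?g z * pmf (?Q z) w) * ?E w)"
    unfolding sum_distrib_left sum_distrib_right
    by (subst sum.swap) (simp only: mult.assoc)
  also have "\<dots> = (\<Sum>w\<in>UNIV. pmf (pair_pmf (kstep mX (Suc n) i) (kstep mY (Suc n) j)) w * ?E w)"
    by (simp only: pair_kstep_Suc)
  finally show ?case .
qed


lemma semigroup_large:
  fixes S :: "nat set"
  assumes add: "\<And>a b. a \<in> S \<Longrightarrow> b \<in> S \<Longrightarrow> a + b \<in> S"
    and nz: "0 \<notin> S" and g: "Gcd S = 1"
  shows "\<exists>N. \<forall>n\<ge>N. n \<in> S"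
proof -
  define S' where "S' = insert 0 S"
  have add': "a + b \<in> S'" if "a \<in> S'" "b \<in> S'" for a b
    using that add unfolding S'_def by auto
  have mult': "k * a \<in> S'" if "a \<in> S'" for k a
  proof (induction k)
    case 0 then show ?case by (simp add: S'_def)
  next
    case (Suc k) then show ?case using add'[OF that Suc] by simp
  qed
  have S'S: "n \<in> S" if "n \<in> S'" "n > 0" for n using that unfolding S'_def by auto
  define G where "G = {int a - int b | a b. a \<in> S' \<and> b \<in> S'}"
  have Gadd: "g + h \<in> G" if "g \<in> G" "h \<in> G" for g h
  proof -
    from that obtain a b c d where "g = int a - int b" "h = int c - int d"
      "a \<in> S'" "b \<in> S'" "c \<in> S'" "d \<in> S'" unfolding G_def by blast
    then show ?thesis unfolding G_def
      by (intro CollectI exI[of _ "a + c"] exI[of _ "b + d"]) (auto intro: add')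
  qed
  have Gneg: "- g \<in> G" if "g \<in> G" for g
  proof -
    from that obtain a b where "g = int a - int b" "a \<in> S'" "b \<in> S'" unfolding G_def by blast
    then have "- g = int b - int a" "b \<in> S'" "a \<in> S'" by auto
    then show ?thesis unfolding G_def by blast
  qed
  have Gnmult: "int k * g \<in> G" if "g \<in> G" for k g
  proof -
    from that obtain a b where ab: "g = int a - int b" "a \<in> S'" "b \<in> S'" unfolding G_def by blast
    have "int k * g = int (k * a) - int (k * b)" using ab(1) by (simp add: right_diff_distrib)
    moreover have "k * a \<in> S'" "k * b \<in> S'" using ab mult' by auto
    ultimately show ?thesis unfolding G_def by blast
  qed
  have Gmult: "q * g \<in> G" if "g \<in> G" for q g
  proof (cases "q \<ge> 0")
    case True
    then show ?thesis using Gnmult[OF that, of "nat q"] by simp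
  next
    case False
    then have "- (int (nat (-q)) * g) \<in> G" using Gneg Gnmult that by blast
    then show ?thesis using False by simp
  qed
  have GS: "int s \<in> G" if "s \<in> S" for s
  proof -
    have "int s = int s - int 0" "s \<in> S'" "0 \<in> S'" using that unfolding S'_def by auto
    then show ?thesis unfolding G_def by blast
  qed
  have "S \<noteq> {}" using g by auto
  then obtain s0 where s0: "s0 \<in> S" by blast
  then have s0pos: "s0 > 0" using nz by (cases s0) auto
  define d where "d = (LEAST n. n > 0 \<and> int n \<in> G)"
  have dP: "d > 0 \<and> int d \<in> G"
    unfolding d_def by (rule LeastI[of _ s0]) (use s0pos GS s0 in auto)
  have dmin: "\<not> (n > 0 \<and> int n \<in> G)" if "n < d" for n
    using that unfolding d_def by (rule not_less_Least)
  have ddvd: "int d dvd g" if "g \<in> G" for g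
  proof -
    have "g mod int d = g + (- ((g div int d) * int d))" by (simp add: minus_div_mult_eq_mod[symmetric])
    moreover have "g + (- ((g div int d) * int d)) \<in> G"
      using Gadd[OF that Gneg[OF Gmult[OF conjunct2[OF dP]]]] by blast
    ultimately have inG: "g mod int d \<in> G" by simp
    have r0: "0 \<le> g mod int d" "g mod int d < int d" using dP by auto
    have "g mod int d = 0"
    proof (rule ccontr)
      assume ne: "g mod int d \<noteq> 0"
      have "nat (g mod int d) > 0 \<and> int (nat (g mod int d)) \<in> G" using ne r0 inG by simp
      moreover have "nat (g mod int d) < d" using r0 by (simp add: nat_less_iff)
      ultimately show False using dmin by blast
    qed
    then show ?thesis by auto
  qed
  have "d dvd s" if "s \<in> S" for s using ddvd[OF GS[OF that]] by simp
  then have "d dvd Gcd S" by (rule Gcd_greatest)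
  then have "d = 1" using g by simp
  then have "1 \<in> G" using dP by simp
  then obtain a b where ab: "1 = int a - int b" "a \<in> S'" "b \<in> S'" unfolding G_def by blast
  then have a: "a = b + 1" by simp
  show ?thesis
  proof (cases "b = 0")
    case True
    then have "1 \<in> S" using ab a S'S by auto
    then have "n \<in> S" if "n \<ge> 1" for n using mult'[of 1 n] S'S that unfolding S'_def by auto
    then show ?thesis by blast
  next
    case False
    have "n \<in> S" if "n \<ge> b * b" for n
    proof -
      define q r where "q = n div b" and "r = n mod b"
      have "r < b" using False unfolding r_def by auto
      have "b \<le> q" using that False unfolding q_def
        using div_le_mono[OF that, of b] by simp
      have "n = (q - r) * b + r * a" using \<open>r < b\<close> \<open>b \<le> q\<close> unfolding a q_def r_def
        by (simp add: algebra_simps diff_mult_distrib)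
      moreover have "(q - r) * b + r * a \<in> S'" by (intro add' mult' ab)
      moreover have "n > 0" using that False by (simp add: less_le_trans[of 0 "b*b" n])
      ultimately show ?thesis using S'S by simp
    qed
    then show ?thesis by blast
  qed
qed


lemma kstep_pos_add:
  assumes "pmf (kstep m a i) x > 0" "pmf (kstep m b x) y > 0"
  shows "pmf (kstep m (a+b) i) y > 0"
  using assms by (auto simp: kstep_add pmf_positive_iff simp del: kstep.simps)

lemma primitive:
  fixes m :: "'a::finite \<Rightarrow> 'a pmf"
  assumes irr: "irreducible_kernel m" and ap: "aperiodic_kernel m"
  shows "\<exists>N. \<forall>n\<ge>N. \<forall>i j. pmf (kstep m n i) j > 0"
proof -
  have "\<exists>N. \<forall>n\<ge>N. n \<in> {n. n > 0 \<and> pmf (kstep m n i) i > 0}" for i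
  proof (rule semigroup_large)
    fix a b assume "a \<in> {n. n > 0 \<and> pmf (kstep m n i) i > 0}" "b \<in> {n. n > 0 \<and> pmf (kstep m n i) i > 0}"
    then show "a + b \<in> {n. n > 0 \<and> pmf (kstep m n i) i > 0}" using kstep_pos_add[of m a i i b i] by auto
  next
    show "0 \<notin> {n. n > 0 \<and> pmf (kstep m n i) i > 0}" by simp
  next
    show "Gcd {n. n > 0 \<and> pmf (kstep m n i) i > 0} = 1" using ap unfolding aperiodic_kernel_def period_def by blast
  qed
  then have "\<exists>f. \<forall>i. \<forall>n\<ge>f i. n \<in> {n. n > 0 \<and> pmf (kstep m n i) i > 0}" by (rule choice[OF allI])
  then obtain Nf where Nf0: "\<forall>i. \<forall>n\<ge>Nf i. n \<in> {n. n > 0 \<and> pmf (kstep m n i) i > 0}" by blast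
  have Nf: "pmf (kstep m n i) i > 0" if "n \<ge> Nf i" for i n using Nf0 that by blast
  have "\<forall>i. \<exists>f. \<forall>j. pmf (kstep m (f j) i) j > 0"
    using irr unfolding irreducible_kernel_def by (intro allI choice) blast
  then have "\<exists>df. \<forall>i. \<forall>j. pmf (kstep m (df i j) i) j > 0" by (rule choice)
  then obtain df where df0: "\<forall>i j. pmf (kstep m (df i j) i) j > 0" by blast
  have df: "pmf (kstep m (df i j) i) j > 0" for i j using df0 by blast
  define N where "N = Max (range (\<lambda>(i,j). Nf i + df i j))"
  have "pmf (kstep m n i) j > 0" if "n \<ge> N" for n i j
  proof -
    have "Nf i + df i j \<le> N" unfolding N_def by (rule Max_ge) (auto intro: rev_image_eqI[of "(i,j)"])
    then have "n - df i j \<ge> Nf i" "n = (n - df i j) + df i j" using that by auto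
    then show ?thesis using kstep_pos_add[OF Nf[OF \<open>n - df i j \<ge> Nf i\<close>] df[of i j]] by simp
  qed
  then show ?thesis by blast
qed


lemma contr:
  fixes g :: "('a::finite \<times> 'a) pmf" and E :: "'a \<times> 'a \<Rightarrow> real"
  assumes lo: "\<And>w. lo' \<le> E w" and hi: "\<And>w. E w \<le> hi'" and zz: "E zz = lo'"
    and eta: "\<eta> \<le> pmf g zz"
  shows "(\<Sum>w\<in>UNIV. pmf g w * E w) \<le> lo' + (1 - \<eta>) * (hi' - lo')"
proof -
  have s1: "(\<Sum>w\<in>UNIV. pmf g w) = 1" by (rule sum_pmf_UNIV)
  have "(\<Sum>w\<in>UNIV. pmf g w * E w) = (\<Sum>w\<in>UNIV. pmf g w * (E w - lo')) + lo'"
    using s1 by (simp add: right_diff_distrib sum_subtractf sum_distrib_right[symmetric])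
  also have "(\<Sum>w\<in>UNIV. pmf g w * (E w - lo')) = (\<Sum>w\<in>UNIV - {zz}. pmf g w * (E w - lo'))"
    using sum.remove[of UNIV zz "\<lambda>w. pmf g w * (E w - lo')"] zz by simp
  also have "\<dots> \<le> (\<Sum>w\<in>UNIV - {zz}. pmf g w * (hi' - lo'))"
    by (rule sum_mono) (auto intro!: mult_left_mono hi)
  also have "\<dots> = (\<Sum>w\<in>UNIV - {zz}. pmf g w) * (hi' - lo')" by (simp add: sum_distrib_right)
  also have "(\<Sum>w\<in>UNIV - {zz}. pmf g w) = 1 - pmf g zz"
    using sum.remove[of UNIV zz "pmf g"] s1 by simp
  also have "(1 - pmf g zz) * (hi' - lo') \<le> (1 - \<eta>) * (hi' - lo')"
    using eta lo[of zz] hi[of zz] by (intro mult_right_mono) auto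
  finally show ?thesis by simp
qed

theorem proposition26:
  fixes mX mY :: "'a::finite \<Rightarrow> 'a pmf" and C :: "'a \<Rightarrow> 'a \<Rightarrow> real"
  assumes "irreducible_kernel mX" and "aperiodic_kernel mX"
    and "irreducible_kernel mY" and "aperiodic_kernel mY"
    and "pseudometric C"
  shows "\<exists>c::real. \<forall>i j. (\<lambda>k. cost_iter mX mY C k i j) \<longlonglongrightarrow> c"
proof -
  define D where "D = cost_iter mX mY C"
  define L where "L = (\<lambda>l. lo (D l))"
  define H where "H = (\<lambda>l. hi (D l))"
  have LH: "L l \<le> D l i j" "D l i j \<le> H l" for l i j
    unfolding L_def H_def by (auto intro: lo_le hi_ge)
  have Linc: "incseq L"
  proof (rule incseq_SucI)
    fix l show "L l \<le> L (Suc l)" unfolding L_def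
      by (rule lo_greatest) (simp add: D_def W_lower)
  qed
  have Hdec: "decseq H"
  proof (rule decseq_SucI)
    fix l show "H (Suc l) \<le> H l" unfolding H_def
    proof (rule hi_least)
      fix x y
      have "D (Suc l) x y \<le> (\<Sum>z\<in>UNIV. pmf (pair_pmf (mX x) (mY y)) z * case_prod (D l) z)"
        by (simp add: D_def W_upper)
      also have "\<dots> \<le> hi (D l)" by (rule avg_le_hi)
      finally show "D (Suc l) x y \<le> hi (D l)" .
    qed
  qed
  obtain NX where NX: "\<And>n i j. n \<ge> NX \<Longrightarrow> pmf (kstep mX n i) j > 0"
    using primitive[OF assms(1,2)] by blast
  obtain NY where NY: "\<And>n i j. n \<ge> NY \<Longrightarrow> pmf (kstep mY n i) j > 0"
    using primitive[OF assms(3,4)] by blast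
  define N where "N = max NX NY"
  define P where "P = (\<lambda>i j. pair_pmf (kstep mX N i) (kstep mY N j))"
  have Ppos: "pmf (P i j) w > 0" for i j w
    unfolding P_def using NX[of N] NY[of N] by (cases w) (auto simp: pmf_pair N_def)
  define \<eta> where "\<eta> = Min (range (\<lambda>(i,j,w). pmf (P i j) w))"
  have eta_le: "\<eta> \<le> pmf (P i j) w" for i j w
    unfolding \<eta>_def by (rule Min_le) (auto intro: rev_image_eqI[of "(i,j,w)"])
  have "\<eta> \<in> range (\<lambda>(i,j,w). pmf (P i j) w)" unfolding \<eta>_def by (rule Min_in) auto
  then have eta_pos: "\<eta> > 0" using Ppos by auto
  obtain i0 j0 w0 :: 'a where True by blast
  have eta_1: "\<eta> \<le> 1" using eta_le[of i0 j0 "(i0,j0)"] pmf_le_1[of "P i0 j0" "(i0,j0)"] by linarith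
  define osc where "osc = (\<lambda>l. H l - L l)"
  have osc_nn: "osc l \<ge> 0" for l unfolding osc_def using LH(1)[of l i0 i0] LH(2)[of l i0 i0] by linarith
  have osc_dec: "decseq osc" unfolding osc_def using Linc Hdec
    by (simp add: decseq_def incseq_def diff_mono)
  have step: "osc (l + N) \<le> (1 - \<eta>) * osc l" for l
  proof -
    have "L l \<le> L (l + N)" using Linc by (simp add: incseq_def)
    moreover have "H (l + N) \<le> L l + (1 - \<eta>) * osc l"
      unfolding H_def
    proof (rule hi_least)
      fix i j
      obtain x0 y0 where xy0: "D l x0 y0 = lo (D l)" using lo_attained by blast
      have "D (l + N) i j \<le> (\<Sum>w\<in>UNIV. pmf (P i j) w * case_prod (D l) w)"
        unfolding D_def P_def by (rule iter_upper)
      also have "\<dots> \<le> L l + (1 - \<eta>) * osc l" unfolding osc_def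
        by (rule contr[where zz="(x0,y0)"]) (auto simp: L_def H_def xy0 intro: lo_le hi_ge eta_le)
      finally show "D (l + N) i j \<le> L l + (1 - \<eta>) * osc l" .
    qed
    ultimately show ?thesis unfolding osc_def by simp
  qed
  have geo: "osc (k * N) \<le> (1 - \<eta>) ^ k * osc 0" for k
  proof (induction k)
    case 0 then show ?case by simp
  next
    case (Suc k)
    have "osc (Suc k * N) = osc (k * N + N)" by (simp add: add.commute)
    also have "\<dots> \<le> (1 - \<eta>) * osc (k * N)" by (rule step)
    also have "\<dots> \<le> (1 - \<eta>) * ((1 - \<eta>) ^ k * osc 0)"
      using Suc eta_1 by (intro mult_left_mono) auto
    finally show ?case by simp
  qed
  obtain Lo where Lo: "osc \<longlonglongrightarrow> Lo" "\<And>i. Lo \<le> osc i"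
    using decseq_convergent[OF osc_dec, of 0] osc_nn by blast
  have "(\<lambda>k. (1 - \<eta>) ^ k * osc 0) \<longlonglongrightarrow> 0 * osc 0"
    by (intro tendsto_intros) (use eta_pos eta_1 in auto)
  then have "(\<lambda>k. (1 - \<eta>) ^ k * osc 0) \<longlonglongrightarrow> 0" by simp
  moreover have "\<forall>k\<ge>0. Lo \<le> (1 - \<eta>) ^ k * osc 0" using Lo(2) geo order_trans by blast
  ultimately have "Lo \<le> 0" using LIMSEQ_le_const by blast
  moreover have "Lo \<ge> 0" using LIMSEQ_le_const[OF Lo(1), of 0] osc_nn by blast
  ultimately have osc0: "osc \<longlonglongrightarrow> 0" using Lo(1) by simp
  obtain c where c: "L \<longlonglongrightarrow> c"
    using incseq_convergent[OF Linc, of "H 0"] LH Hdec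
    by (metis decseq_def order_trans zero_le)
  have Hc: "H \<longlonglongrightarrow> c"
  proof -
    have "(\<lambda>l. L l + osc l) \<longlonglongrightarrow> c + 0" by (intro tendsto_intros c osc0)
    then show ?thesis by (simp add: osc_def)
  qed
  have "\<forall>i j. (\<lambda>k. cost_iter mX mY C k i j) \<longlonglongrightarrow> c"
  proof (intro allI)
    fix i j
    show "(\<lambda>k. cost_iter mX mY C k i j) \<longlonglongrightarrow> c"
      by (rule tendsto_sandwich[OF _ _ c Hc]) (auto simp: D_def[symmetric] LH)
  qed
  then show ?thesis by blast
qed

end
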